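(* For every $i\geq0$ we have $$\frac{\sqrt\Delta}{c_{i+1}}\left(1-\frac1{c_ic_{i+1}}\right)<N_i<\frac{\sqrt\Delta}{c_{i+1}},$$ and in particular $\frac{N_i}{\sqrt\Delta}<\frac1{u_{i+1}}$, and $\frac1{u_{i+1}+10}<\frac{N_i}{\sqrt\Delta}$ whenever $u_{i+1}\geq3$.
   Context: $D>1$ squarefree, $K=\mathbb{Q}(\sqrt D)$, $\Delta$ its discriminant, $\alpha'$ the conjugate of $\alpha$ and $N(\alpha)=\alpha\alpha'$. $\omega_D=\sqrt D$ if $D\equiv2,3\pmod4$, $\omega_D=\frac{1+\sqrt D}2$ if $D\equiv1\pmod4$, with continued fraction $\omega_D=[u_0;u_1,u_2,\dots]$. Let $p_{-1}=1,q_{-1}=0,p_0=u_0,q_0=1$, $p_{i+1}=u_{i+1}p_i+p_{i-1}$, $q_{i+1}=u_{i+1}q_i+q_{i-1}$, $\alpha_i=p_i-q_i\omega_D'$, $N_i=|N(\alpha_i)|$, and $c_i=[u_i;u_{i+1},u_{i+2},\dots]$ the complete quotients (so $c_0=\omega_D$). *)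

theory Defs
  imports Complex_Main "HOL-Computational_Algebra.Squarefree"
begin

definition omegaD :: "int \<Rightarrow> real" where
  "omegaD D = (if D mod 4 = 1 then (1 + sqrt (real_of_int D)) / 2 else sqrt (real_of_int D))"

definition omegaD_conj :: "int \<Rightarrow> real" where
  "omegaD_conj D = (if D mod 4 = 1 then (1 - sqrt (real_of_int D)) / 2 else - sqrt (real_of_int D))"

definition disc :: "int \<Rightarrow> int" where
  "disc D = (if D mod 4 = 1 then D else 4 * D)"

fun cf_cq :: "real \<Rightarrow> nat \<Rightarrow> real" where
  "cf_cq x 0 = x"
| "cf_cq x (Suc n) = 1 / (cf_cq x n - of_int \<lfloor>cf_cq x n\<rfloor>)"

definition cf_u :: "real \<Rightarrow> nat \<Rightarrow> int" where
  "cf_u x n = \<lfloor>cf_cq x n\<rfloor>"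

text \<open>Convergent numerators/denominators, with p_{-1} = 1, q_{-1} = 0, p_0 = u_0, q_0 = 1.\<close>
fun cf_p :: "real \<Rightarrow> nat \<Rightarrow> int" where
  "cf_p x 0 = cf_u x 0"
| "cf_p x (Suc 0) = cf_u x 1 * cf_u x 0 + 1"
| "cf_p x (Suc (Suc n)) = cf_u x (Suc (Suc n)) * cf_p x (Suc n) + cf_p x n"

fun cf_q :: "real \<Rightarrow> nat \<Rightarrow> int" where
  "cf_q x 0 = 1"
| "cf_q x (Suc 0) = cf_u x 1"
| "cf_q x (Suc (Suc n)) = cf_u x (Suc (Suc n)) * cf_q x (Suc n) + cf_q x n"

text \<open>N_i = |N(alpha_i)| where alpha_i = p_i - q_i omega_D' and N(a) = a a'.\<close>
definition normN :: "int \<Rightarrow> nat \<Rightarrow> real" where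
  "normN D i = \<bar>(of_int (cf_p (omegaD D) i) - of_int (cf_q (omegaD D) i) * omegaD_conj D) *
                 (of_int (cf_p (omegaD D) i) - of_int (cf_q (omegaD D) i) * omegaD D)\<bar>"

end

theory Submission
  imports Defs
begin

lemma sqrt_sqfree_irrat:
  fixes D :: int
  assumes "D > 1" "squarefree D"
  shows "sqrt (real_of_int D) \<notin> \<rat>"
proof
  assume "sqrt (real_of_int D) \<in> \<rat>"
  then obtain a b :: int where b: "b > 0" "coprime a b" and e: "sqrt (real_of_int D) = of_int a / of_int b"
    by (rule Rats_cases')
  have "real_of_int D = (of_int a / of_int b)^2" using e assms(1) by (metis of_int_0_le_iff less_le_not_le real_sqrt_pow2 zero_less_one order.strict_trans)
  hence "real_of_int D * (of_int b)^2 = (of_int a)^2" using b by (simp add: field_simps power2_eq_square)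
  hence ab: "D * b^2 = a^2" by (metis of_int_eq_iff of_int_mult of_int_power)
  hence "b^2 dvd a^2" by (metis dvd_triv_right)
  moreover have "coprime (b^2) (a^2)" using b(2) by (simp add: coprime_commute)
  ultimately have "b^2 dvd 1" by (meson coprime_dvd_mult_right_iff dvd_refl coprime_absorb_left  coprime_common_divisor)
  hence "b = 1" using b(1) by (metis is_unit_power_iff zdvd1_eq abs_of_pos zero_neq_numeral)  
  hence "a^2 dvd D" using ab by simp
  hence "a dvd 1" using assms(2) squarefreeD by blast
  hence "a^2 = 1" by (metis is_unit_power_iff power_one zdvd1_eq abs_power2 power2_abs abs_1)
  thus False using ab \<open>b = 1\<close> assms(1) by simp
qed

lemma cq_irr: "x \<notin> \<rat> \<Longrightarrow> cf_cq x n \<notin> \<rat>"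
proof (induction n)
  case 0 then show ?case by simp
next
  case (Suc n)
  show ?case
  proof
    assume h: "cf_cq x (Suc n) \<in> \<rat>"
    have "cf_cq x n = of_int \<lfloor>cf_cq x n\<rfloor> + 1 / cf_cq x (Suc n)" by simp
    have "inverse (cf_cq x (Suc n)) \<in> \<rat>" using h by (rule Rats_inverse)
    hence "cf_cq x n - of_int \<lfloor>cf_cq x n\<rfloor> \<in> \<rat>" by simp
    hence "cf_cq x n \<in> \<rat>" by (metis Rats_add Rats_of_int diff_add_cancel)
    then show False using Suc by simp
  qed
qed

lemma cq_frac: "x \<notin> \<rat> \<Longrightarrow> 0 < cf_cq x n - of_int \<lfloor>cf_cq x n\<rfloor> \<and> cf_cq x n - of_int \<lfloor>cf_cq x n\<rfloor> < 1"
proof -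
  assume "x \<notin> \<rat>"
  hence "cf_cq x n \<noteq> of_int \<lfloor>cf_cq x n\<rfloor>" using cq_irr by (metis Rats_of_int)
  thus ?thesis by (smt (verit) of_int_floor_le real_of_int_floor_add_one_gt)
qed

lemma cq_gt1: "x \<notin> \<rat> \<Longrightarrow> cf_cq x (Suc n) > 1"
proof -
  assume "x \<notin> \<rat>"
  then have f: "0 < cf_cq x n - of_int \<lfloor>cf_cq x n\<rfloor>" "cf_cq x n - of_int \<lfloor>cf_cq x n\<rfloor> < 1" using cq_frac by blast+
  show ?thesis using f by (simp add: divide_simps)
qed

lemma cq_rec: "x \<notin> \<rat> \<Longrightarrow> cf_cq x n = of_int (cf_u x n) + 1 / cf_cq x (Suc n)"
  using cq_frac[of x n] by (simp add: cf_u_def)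

lemma u_ge1: "x \<notin> \<rat> \<Longrightarrow> cf_u x (Suc n) \<ge> 1"
  using cq_gt1[of x n] unfolding cf_u_def by linarith

declare cf_cq.simps(2)[simp del]

definition Qm :: "real \<Rightarrow> nat \<Rightarrow> int" where
  "Qm x n = (case n of 0 \<Rightarrow> 0 | Suc m \<Rightarrow> cf_q x m)"
definition Pm :: "real \<Rightarrow> nat \<Rightarrow> int" where
  "Pm x n = (case n of 0 \<Rightarrow> 1 | Suc m \<Rightarrow> cf_p x m)"

lemma q_rec: "cf_q x (Suc n) = cf_u x (Suc n) * cf_q x n + Qm x n"
  by (cases n) (auto simp: Qm_def)
lemma p_rec: "cf_p x (Suc n) = cf_u x (Suc n) * cf_p x n + Pm x n"
  by (cases n) (auto simp: Pm_def)

lemma q_ge1: "x \<notin> \<rat> \<Longrightarrow> cf_q x n \<ge> 1 \<and> cf_q x (Suc n) \<ge> 1"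
proof (induction n)
  case 0 then show ?case using u_ge1[of x 0] by simp
next
  case (Suc n)
  have "cf_u x (Suc (Suc n)) * cf_q x (Suc n) \<ge> 1 * cf_q x (Suc n)"
    using Suc u_ge1[of x "Suc n"] by (intro mult_right_mono) auto
  then show ?case using Suc by (smt (verit) cf_q.simps(3))
qed

lemma Qm_ge0: "x \<notin> \<rat> \<Longrightarrow> Qm x n \<ge> 0"
  using q_ge1 by (cases n) (auto simp: Qm_def, smt (verit))

lemma det: "cf_p x n * Qm x n - cf_q x n * Pm x n = (-1)^(n+1)"
proof (induction n)
  case 0 then show ?case by (simp add: Qm_def Pm_def)
next
  case (Suc n)
  have "cf_p x (Suc n) * Qm x (Suc n) - cf_q x (Suc n) * Pm x (Suc n)
     = (cf_u x (Suc n) * cf_p x n + Pm x n) * cf_q x n - (cf_u x (Suc n) * cf_q x n + Qm x n) * cf_p x n"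
    by (simp add: Qm_def Pm_def p_rec q_rec)
  also have "\<dots> = - (cf_p x n * Qm x n - cf_q x n * Pm x n)" by (simp add: algebra_simps)
  finally show ?case using Suc by simp
qed

definition dd :: "real \<Rightarrow> nat \<Rightarrow> real" where
  "dd x n = cf_cq x (Suc n) * of_int (cf_q x n) + of_int (Qm x n)"

definition ee :: "real \<Rightarrow> nat \<Rightarrow> real" where
  "ee x n = cf_cq x (Suc n) * of_int (cf_p x n) + of_int (Pm x n)"

lemma cc_rec: "x \<notin> \<rat> \<Longrightarrow> cf_cq x (Suc n) * cf_cq x (Suc (Suc n)) = of_int (cf_u x (Suc n)) * cf_cq x (Suc (Suc n)) + 1"
proof -
  assume h: "x \<notin> \<rat>"
  have c: "cf_cq x (Suc n) = of_int (cf_u x (Suc n)) + 1 / cf_cq x (Suc (Suc n))" using cq_rec[OF h] by blast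
  have pos: "cf_cq x (Suc (Suc n)) > 0" using cq_gt1[OF h, of "Suc n"] by linarith
  show ?thesis by (subst c) (use pos in \<open>simp add: distrib_right\<close>)
qed

lemma dd_rec: "x \<notin> \<rat> \<Longrightarrow> dd x (Suc n) = cf_cq x (Suc (Suc n)) * dd x n"
proof -
  assume h: "x \<notin> \<rat>"
  let ?c = "cf_cq x (Suc n)" and ?c2 = "cf_cq x (Suc (Suc n))" and ?u = "real_of_int (cf_u x (Suc n))"
  let ?q = "real_of_int (cf_q x n)" and ?m = "real_of_int (Qm x n)"
  have cc: "?c * ?c2 = ?u * ?c2 + 1" by (rule cc_rec[OF h])
  have "dd x (Suc n) = ?c2 * (?u * ?q + ?m) + ?q" by (simp add: dd_def q_rec Qm_def)
  also have "\<dots> = (?u * ?c2 + 1) * ?q + ?c2 * ?m" by (simp add: algebra_simps)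
  also have "\<dots> = (?c * ?c2) * ?q + ?c2 * ?m" by (simp only: cc)
  also have "\<dots> = ?c2 * dd x n" by (simp add: dd_def algebra_simps)
  finally show ?thesis .
qed

lemma ee_rec: "x \<notin> \<rat> \<Longrightarrow> ee x (Suc n) = cf_cq x (Suc (Suc n)) * ee x n"
proof -
  assume h: "x \<notin> \<rat>"
  let ?c = "cf_cq x (Suc n)" and ?c2 = "cf_cq x (Suc (Suc n))" and ?u = "real_of_int (cf_u x (Suc n))"
  let ?q = "real_of_int (cf_p x n)" and ?m = "real_of_int (Pm x n)"
  have cc: "?c * ?c2 = ?u * ?c2 + 1" by (rule cc_rec[OF h])
  have "ee x (Suc n) = ?c2 * (?u * ?q + ?m) + ?q" by (simp add: ee_def p_rec Pm_def)
  also have "\<dots> = (?u * ?c2 + 1) * ?q + ?c2 * ?m" by (simp add: algebra_simps)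
  also have "\<dots> = (?c * ?c2) * ?q + ?c2 * ?m" by (simp only: cc)
  also have "\<dots> = ?c2 * ee x n" by (simp add: ee_def algebra_simps)
  finally show ?thesis .
qed

lemma conv: "x \<notin> \<rat> \<Longrightarrow> x * dd x n = ee x n"
proof (induction n)
  case 0
  have e: "x = of_int (cf_u x 0) + 1 / cf_cq x 1" using cq_rec[OF 0, of 0] by simp
  have p: "cf_cq x 1 > 0" using cq_gt1[OF 0, of 0] by (simp del: cf_cq.simps)
  have "x * cf_cq x 1 = of_int (cf_u x 0) * cf_cq x 1 + 1"
    by (subst e) (use p in \<open>simp add: distrib_right\<close>)
  then show ?case by (simp add: dd_def ee_def Qm_def Pm_def algebra_simps)
next
  case (Suc n)
  then show ?case by (simp add: dd_rec ee_rec)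
qed

lemma eps: "x \<notin> \<rat> \<Longrightarrow> (of_int (cf_p x n) - of_int (cf_q x n) * x) * dd x n = (-1)^(n+1)"
proof -
  assume h: "x \<notin> \<rat>"
  have "(of_int (cf_p x n) - of_int (cf_q x n) * x) * dd x n
      = of_int (cf_p x n) * dd x n - of_int (cf_q x n) * (x * dd x n)" by (simp add: algebra_simps)
  also have "\<dots> = real_of_int (cf_p x n * Qm x n - cf_q x n * Pm x n)"
    unfolding conv[OF h] by (simp add: dd_def ee_def algebra_simps)
  finally show ?thesis by (simp add: det)
qed

lemma lower_abs:
  fixes s c ci Q Qk Qmk dk d sg :: real
  assumes "s > 1" "c > 1" "ci > 1" "Qk \<ge> 1" "Qmk \<ge> 0" "dk = ci*Qk + Qmk" "d = c*dk" "d = c*Q + Qk"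
    "sg = 1 \<or> (sg = -1 \<and> Qmk \<ge> 1)"
  shows "s/c*(1-1/(ci*c)) < Q*s/d + sg/d^2"
proof -
  have ciQ: "ci*Qk \<ge> ci" using assms mult_left_mono[of 1 Qk ci] by simp
  hence dkp: "dk \<ge> ci" using assms by linarith
  have key: "- sg * ci < s * dk * Qmk"
  proof (cases "sg = 1")
    case True
    have "s * dk * Qmk \<ge> 0" using assms dkp by simp
    then show ?thesis using True assms(3) by simp
  next
    case False
    then have "sg = -1" "Qmk \<ge> 1" using assms by auto
    have "s * Qmk \<ge> 1 * 1" using assms \<open>Qmk \<ge> 1\<close> by (intro mult_mono) auto
    hence "dk * (s * Qmk) \<ge> dk * 1" using dkp assms by (intro mult_left_mono) auto
    hence "s * dk * Qmk \<ge> dk" by (simp add: algebra_simps)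
    moreover have "dk > ci" using ciQ assms(6) \<open>Qmk \<ge> 1\<close> by linarith
    ultimately show ?thesis using \<open>sg = -1\<close> by simp
  qed
  have cQ: "c * Q = c * dk - Qk" using assms by simp
  have pos: "ci * c^2 * dk^2 > 0" using assms dkp by simp
  have L: "s/c*(1-1/(ci*c)) * (ci * c^2 * dk^2) = s*c*ci*dk^2 - s*dk^2"
    using assms dkp by (simp add: field_simps power2_eq_square)
  have nz: "c \<noteq> 0" "dk \<noteq> 0" using assms dkp by auto
  have R: "(Q*s/d + sg/d^2) * (ci * c^2 * dk^2) = s*ci*dk*(c*Q) + sg*ci"
    using nz unfolding assms(7) by (simp add: field_simps power2_eq_square)
  have "s*c*ci*dk^2 - s*dk^2 < s*ci*dk*(c*Q) + sg*ci"
    unfolding cQ using key assms by (simp add: algebra_simps power2_eq_square)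
  hence "s/c*(1-1/(ci*c)) * (ci * c^2 * dk^2) < (Q*s/d + sg/d^2) * (ci * c^2 * dk^2)"
    using L R by simp
  thus ?thesis using pos mult_less_cancel_right_pos by blast
qed

lemma upper_abs:
  fixes s c Q Qm d sg :: real
  assumes "s > 1" "c > 1" "Q \<ge> 1" "Qm \<ge> 0" "d = c*Q + Qm"
    "sg = -1 \<or> (sg = 1 \<and> Qm \<ge> 1)"
  shows "Q*s/d + sg/d^2 < s/c"
proof -
  have cQ: "c*Q \<ge> c" using assms mult_left_mono[of 1 Q c] by simp
  hence dp: "d \<ge> c" using assms by linarith
  have key: "sg * c < s * d * Qm"
  proof (cases "sg = 1")
    case False
    then have "sg = -1" using assms by auto
    have "s * d * Qm \<ge> 0" using assms dp by simp
    then show ?thesis using \<open>sg = -1\<close> assms(2) by simp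
  next
    case True
    then have "Qm \<ge> 1" using assms by auto
    have "s * Qm \<ge> 1 * 1" using assms \<open>Qm \<ge> 1\<close> by (intro mult_mono) auto
    hence "d * (s * Qm) \<ge> d * 1" using dp assms by (intro mult_left_mono) auto
    hence "s * d * Qm \<ge> d" by (simp add: algebra_simps)
    moreover have "d > c" using cQ assms(5) \<open>Qm \<ge> 1\<close> by linarith
    ultimately show ?thesis using True by simp
  qed
  have nz: "c \<noteq> 0" "d \<noteq> 0" using assms dp by auto
  have pos: "c * d^2 > 0" using assms dp by simp
  have L: "(Q*s/d + sg/d^2) * (c * d^2) = Q*s*c*d + sg*c"
    using nz by (simp add: field_simps power2_eq_square)
  have R: "s/c * (c * d^2) = s*d*(c*Q) + s*d*Qm"
    using nz unfolding power2_eq_square by (simp add: assms(5) field_simps)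
  have "Q*s*c*d + sg*c < s*d*(c*Q) + s*d*Qm" using key by (simp add: algebra_simps)
  hence "(Q*s/d + sg/d^2) * (c * d^2) < s/c * (c * d^2)" using L R by simp
  thus ?thesis using pos mult_less_cancel_right_pos by blast
qed

lemma lower0_abs:
  fixes s c x :: real
  assumes "s > x" "x > 1" "c > 1"
  shows "s/c*(1-1/(x*c)) < 1*s/c + (-1)/c^2"
proof -
  have pos: "x * c^2 > 0" using assms by simp
  have L: "s/c*(1-1/(x*c)) * (x * c^2) = s*c*x - s"
    using assms by (simp add: field_simps power2_eq_square)
  have R: "(1*s/c + (-1)/c^2) * (x * c^2) = s*c*x - x"
    using assms by (simp add: field_simps power2_eq_square)
  have "s/c*(1-1/(x*c)) * (x * c^2) < (1*s/c + (-1)/c^2) * (x * c^2)" using L R assms by simp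
  thus ?thesis using pos mult_less_cancel_right_pos by blast
qed

lemma nval_abs:
  fixes e d sg Q s :: real
  assumes "e * d = sg" "sg = 1 \<or> sg = -1" "d > 1" "Q \<ge> 1" "s > 1"
  shows "\<bar>(e + Q*s) * e\<bar> = Q*s/d + sg/d^2"
proof -
  have e: "e = sg / d" using assms by (simp add: field_simps)
  have ae: "\<bar>e\<bar> = 1/d" using e assms by auto
  have "\<bar>e\<bar> < 1" using ae assms by simp
  moreover have "Q*s \<ge> 1" using assms by (metis less_le_not_le mult_le_cancel_left1 order.trans order_less_imp_le zero_less_one)
  ultimately have "e + Q*s > 0" by linarith
  hence "\<bar>(e + Q*s) * e\<bar> = (e + Q*s) * (1/d)" using ae by (simp add: abs_mult)
  also have "\<dots> = Q*s/d + sg/d^2" using e assms(3) by (simp add: field_simps power2_eq_square)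
  finally show ?thesis .
qed

lemma fourth_abs:
  fixes u c ci s N :: real
  assumes "u \<ge> 3" "u \<le> c" "c < u + 1" "ci > 1" "s > 0" "s/c*(1-1/(ci*c)) < N"
  shows "1/(u+10) < N/s"
proof -
  have c0: "c > 0" using assms by simp
  have "1/(ci*c) < 1/c" using assms c0 by (simp add: divide_simps)
  hence "1/c*(1-1/c) < 1/c*(1-1/(ci*c))" using c0 by (intro mult_strict_left_mono) auto
  moreover have "1/c*(1-1/c) = (c-1)/c^2" using c0 by (simp add: field_simps power2_eq_square)
  moreover have "c^2 \<le> (c-1)*(u+10)"
  proof -
    have "c*c \<le> c*(u+1)" using assms c0 by (intro mult_left_mono) auto
    moreover have "(c-1)*(u+10) - c*(u+1) = 9*c - u - 10" by (simp add: algebra_simps)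
    ultimately show ?thesis unfolding power2_eq_square using assms by linarith
  qed
  hence "1/(u+10) \<le> (c-1)/c^2" using assms c0 by (simp add: divide_simps)
  moreover have "s/c*(1-1/(ci*c)) / s = 1/c*(1-1/(ci*c))" using assms by simp
  moreover have "s/c*(1-1/(ci*c)) / s < N / s" using assms(5,6) by (rule divide_strict_right_mono[rotated])
  ultimately show ?thesis by linarith
qed

lemma third_abs:
  fixes u c s N :: real
  assumes "u \<ge> 1" "u \<le> c" "s > 0" "N < s/c"
  shows "N/s < 1/u"
proof -
  have "N/s < 1/c" using assms by (simp add: divide_simps mult.commute)
  also have "1/c \<le> 1/u" using assms by (simp add: divide_simps)
  finally show ?thesis .
qed


lemma omega_facts:
  fixes D :: int
  assumes "D > 1" "squarefree D"
  shows "omegaD D \<notin> \<rat>" "omegaD D - omegaD_conj D = sqrt (real_of_int (disc D))"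
    "sqrt (real_of_int (disc D)) > 1" "omegaD D > 1" "omegaD D < sqrt (real_of_int (disc D))"
proof -
  have irr: "sqrt (real_of_int D) \<notin> \<rat>" by (rule sqrt_sqfree_irrat[OF assms])
  have g1: "sqrt (real_of_int D) > 1" using assms(1) by simp
  have s4: "sqrt (real_of_int (4 * D)) = 2 * sqrt (real_of_int D)"
  proof -
    have "sqrt (4::real) = 2" by (rule real_sqrt_unique) auto
    thus ?thesis by (simp add: real_sqrt_mult)
  qed
  show "omegaD D \<notin> \<rat>"
  proof
    assume h: "omegaD D \<in> \<rat>"
    show False
    proof (cases "D mod 4 = 1")
      case True
      hence "sqrt (real_of_int D) = 2 * omegaD D - 1" by (simp add: omegaD_def field_simps)
      moreover have "2 * omegaD D - 1 \<in> \<rat>" using h by simp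
      ultimately show False using irr by simp
    next
      case False
      thus False using h irr by (simp add: omegaD_def)
    qed
  qed
  show "omegaD D - omegaD_conj D = sqrt (real_of_int (disc D))"
  proof (cases "D mod 4 = 1")
    case True then show ?thesis by (simp add: omegaD_def omegaD_conj_def disc_def field_simps)
  next
    case False then show ?thesis by (simp only: omegaD_def omegaD_conj_def disc_def if_False s4)
  qed
  show "sqrt (real_of_int (disc D)) > 1" using g1
    by (cases "D mod 4 = 1") (auto simp: disc_def s4)
  show "omegaD D > 1" using g1
    by (cases "D mod 4 = 1") (auto simp: omegaD_def)
  show "omegaD D < sqrt (real_of_int (disc D))" using g1
    by (cases "D mod 4 = 1") (auto simp: omegaD_def disc_def s4)
qed

theorem lemma5:
  fixes D :: int and i :: nat
  assumes "D > 1" and "squarefree D"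
  defines "c \<equiv> cf_cq (omegaD D)" and "u \<equiv> cf_u (omegaD D)"
  shows "sqrt (real_of_int (disc D)) / c (i+1) * (1 - 1 / (c i * c (i+1))) < normN D i
         \<and> normN D i < sqrt (real_of_int (disc D)) / c (i+1)
         \<and> normN D i / sqrt (real_of_int (disc D)) < 1 / real_of_int (u (i+1))
         \<and> (u (i+1) \<ge> 3 \<longrightarrow> 1 / (real_of_int (u (i+1)) + 10) < normN D i / sqrt (real_of_int (disc D)))"
proof -
  define x where "x = omegaD D"
  define s where "s = sqrt (real_of_int (disc D))"
  have hx: "x \<notin> \<rat>" and xs: "x - omegaD_conj D = s" and s1: "s > 1" and x1: "x > 1" and xlt: "x < s"
    using omega_facts[OF assms(1,2)] unfolding x_def s_def by auto
  define P where "P = real_of_int (cf_p x i)"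
  define Q where "Q = real_of_int (cf_q x i)"
  define e where "e = P - Q * x"
  define sg :: real where "sg = (-1)^(i+1)"
  define d where "d = dd x i"
  define N where "N = normN D i"
  have cx: "c = cf_cq x" "u = cf_u x" unfolding c_def u_def x_def by auto
  have Q1: "Q \<ge> 1" unfolding Q_def using q_ge1[OF hx, of i] by simp
  have c1: "c (Suc i) > 1" unfolding cx by (rule cq_gt1[OF hx])
  have Qm0: "real_of_int (Qm x i) \<ge> 0" using Qm_ge0[OF hx, of i] by simp
  have "c (Suc i) * Q \<ge> c (Suc i)" using c1 Q1 mult_left_mono[of 1 Q "c (Suc i)"] by simp
  hence d1: "d > 1" using c1 Qm0 unfolding d_def dd_def Q_def cx by linarith
  have ed: "e * d = sg" unfolding e_def d_def sg_def P_def Q_def using eps[OF hx, of i] by simp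
  have sgv: "sg = 1 \<or> sg = -1" unfolding sg_def by (simp add: minus_one_power_iff)
  have "N = \<bar>(e + Q*s) * e\<bar>"
  proof -
    have h: "P - Q * omegaD_conj D = e + Q * s" using xs unfolding e_def by (simp add: algebra_simps)
    have "N = \<bar>(P - Q * omegaD_conj D) * (P - Q * x)\<bar>" unfolding N_def normN_def P_def Q_def x_def by simp
    thus ?thesis by (simp only: h e_def[symmetric])
  qed
  hence Nv: "N = Q*s/d + sg/d^2" using nval_abs[OF ed sgv d1 Q1 s1] by simp
  have dQ: "d = c (Suc i) * Q + real_of_int (Qm x i)" unfolding d_def dd_def cx Q_def by simp
  have up: "N < s / c (Suc i)"
  proof -
    have "sg = -1 \<or> (sg = 1 \<and> real_of_int (Qm x i) \<ge> 1)"
    proof (cases i)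
      case 0 then show ?thesis by (simp add: sg_def)
    next
      case (Suc k)
      then have "real_of_int (Qm x i) \<ge> 1" using q_ge1[OF hx, of k] by (simp add: Qm_def)
      then show ?thesis using sgv by auto
    qed
    then show ?thesis unfolding Nv using upper_abs[OF s1 c1 Q1 Qm0 dQ] by simp
  qed
  have lo: "s / c (Suc i) * (1 - 1 / (c i * c (Suc i))) < N"
  proof (cases i)
    case 0
    have "Q = 1" "d = c (Suc i)" "sg = -1" using dQ 0 by (simp_all add: Q_def Qm_def sg_def)
    moreover have "c i = x" using 0 cx by simp
    ultimately show ?thesis unfolding Nv using lower0_abs[OF xlt x1 c1] by simp
  next
    case (Suc k)
    define dk where "dk = dd x k"
    define Qk where "Qk = real_of_int (cf_q x k)"
    define Qmk where "Qmk = real_of_int (Qm x k)"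
    have ci1: "c i > 1" unfolding cx Suc by (rule cq_gt1[OF hx])
    have Qk1: "Qk \<ge> 1" unfolding Qk_def using q_ge1[OF hx, of k] by simp
    have Qmk0: "Qmk \<ge> 0" unfolding Qmk_def using Qm_ge0[OF hx, of k] by simp
    have e1: "dk = c i * Qk + Qmk" unfolding dk_def dd_def Qk_def Qmk_def cx Suc by simp
    have e2: "d = c (Suc i) * dk" unfolding d_def dk_def cx Suc by (rule dd_rec[OF hx])
    have e3: "d = c (Suc i) * Q + Qk" using dQ unfolding Qk_def Suc by (simp add: Qm_def)
    have sgc: "sg = 1 \<or> (sg = -1 \<and> Qmk \<ge> 1)"
    proof (cases k)
      case 0 then show ?thesis using Suc by (simp add: sg_def)
    next
      case (Suc m)
      then have "Qmk \<ge> 1" using q_ge1[OF hx, of m] by (simp add: Qmk_def Qm_def)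
      then show ?thesis using sgv by auto
    qed
    show ?thesis unfolding Nv using lower_abs[OF s1 c1 ci1 Qk1 Qmk0 e1 e2 e3 sgc] by simp
  qed
  have uc: "real_of_int (u (Suc i)) \<le> c (Suc i)" "c (Suc i) < real_of_int (u (Suc i)) + 1"
    unfolding cx cf_u_def by linarith+
  have u1: "real_of_int (u (Suc i)) \<ge> 1" unfolding cx using u_ge1[OF hx, of i] by simp
  have third: "N / s < 1 / real_of_int (u (Suc i))"
    using third_abs[OF u1 uc(1) _ up] s1 by simp
  have fourth: "u (Suc i) \<ge> 3 \<longrightarrow> 1 / (real_of_int (u (Suc i)) + 10) < N / s"
  proof
    assume "u (Suc i) \<ge> 3"
    hence "real_of_int (u (Suc i)) \<ge> 3" by simp
    moreover have "c i > 1"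
    proof (cases i)
      case 0 then show ?thesis using x1 cx by simp
    next
      case (Suc k) then show ?thesis unfolding cx by (simp add: cq_gt1[OF hx])
    qed
    ultimately show "1 / (real_of_int (u (Suc i)) + 10) < N / s"
      using fourth_abs[OF _ uc(1) uc(2) _ _ lo] s1 by simp
  qed
  show ?thesis using lo up third fourth unfolding N_def s_def by simp
qed

end
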